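(* Let $\epsilon>0$ and $c>1/4+\epsilon$. Then for every $n$, $\mathrm{ORS}_n(cn)\le 1/\epsilon+1$.
   Context: For a matching $M$, $V(M)$ denotes the set of vertices matched by $M$. A sequence $M_1,\dots,M_t$ of pairwise edge-disjoint matchings is called ordered-induced if for every $i\in[t]$, $M_i$ is an induced matching of the graph with edge set $M_1\cup\dots\cup M_i$, i.e., no edge of $M_1\cup\cdots\cup M_{i-1}$ has both endpoints in $V(M_i)$. An $n$-vertex graph is an $\mathrm{ORS}_n(r,t)$ graph if its edge set is the union of an ordered-induced sequence of $t$ matchings, each of size exactly $r$. $\mathrm{ORS}_n(r)$ denotes the maximum $t$ for which an $\mathrm{ORS}_n(r,t)$ graph exists (for non-integer $r$, $r$ is replaced by $\lceil r\rceil$). *)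

theory Defs
  imports Main Complex_Main
begin

definition is_matching :: "nat \<Rightarrow> nat set set \<Rightarrow> bool" where
  "is_matching n M \<longleftrightarrow>
     (\<forall>e\<in>M. e \<subseteq> {..<n} \<and> card e = 2) \<and>
     (\<forall>e\<in>M. \<forall>f\<in>M. e \<noteq> f \<longrightarrow> e \<inter> f = {})"

definition matched_vertices :: "nat set set \<Rightarrow> nat set" where
  "matched_vertices M = \<Union>M"

definition ordered_induced :: "(nat \<Rightarrow> nat set set) \<Rightarrow> nat \<Rightarrow> bool" where
  "ordered_induced Ms t \<longleftrightarrow>
     (\<forall>i<t. \<forall>j<t. i \<noteq> j \<longrightarrow> Ms i \<inter> Ms j = {}) \<and>
     (\<forall>i<t. \<forall>j<i. \<forall>e\<in>Ms j. \<not> e \<subseteq> matched_vertices (Ms i))"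

text \<open>An ORS_n(r,t) graph exists: edge set is the union of an ordered-induced
  sequence of t matchings of size exactly r on n vertices.\<close>
definition ORS_graph_exists :: "nat \<Rightarrow> nat \<Rightarrow> nat \<Rightarrow> bool" where
  "ORS_graph_exists n r t \<longleftrightarrow>
     (\<exists>Ms. (\<forall>i<t. is_matching n (Ms i) \<and> card (Ms i) = r) \<and> ordered_induced Ms t)"

definition ORS :: "nat \<Rightarrow> real \<Rightarrow> nat" where
  "ORS n r = Sup {t. ORS_graph_exists n (nat \<lceil>r\<rceil>) t}"

end

theory Submission
  imports Defs
begin

lemma matching_fin:
  assumes "is_matching n M" shows "finite M" "\<forall>e\<in>M. finite e \<and> card e = 2" "\<Union>M \<subseteq> {..<n}"
proof -
  have "M \<subseteq> Pow {..<n}" using assms unfolding is_matching_def by auto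
  then show "finite M" by (rule finite_subset) simp
  show "\<forall>e\<in>M. finite e \<and> card e = 2" using assms unfolding is_matching_def
    by (auto intro: card_ge_0_finite)
  show "\<Union>M \<subseteq> {..<n}" using assms unfolding is_matching_def by auto
qed

lemma card_V:
  assumes "is_matching n M" shows "card (\<Union>M) = 2 * card M"
proof -
  have "pairwise disjnt M" using assms unfolding is_matching_def pairwise_def disjnt_def by auto
  then have "card (\<Union>M) = sum card M" using matching_fin[OF assms] by (intro card_Union_disjoint) auto
  also have "\<dots> = sum (\<lambda>_. 2) M" using matching_fin(2)[OF assms] by (intro sum.cong) auto
  finally show ?thesis by simp
qed

lemma inter_bound:
  assumes "is_matching n M" "\<forall>e\<in>M. \<not> e \<subseteq> W"
  shows "card (\<Union>M \<inter> W) \<le> card M"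
proof -
  have "\<Union>M \<inter> W = (\<Union>e\<in>M. e \<inter> W)" by auto
  moreover have "card (\<Union>e\<in>M. e \<inter> W) \<le> (\<Sum>e\<in>M. card (e \<inter> W))"
    by (rule card_UN_le[OF matching_fin(1)[OF assms(1)]])
  ultimately have "card (\<Union>M \<inter> W) \<le> (\<Sum>e\<in>M. card (e \<inter> W))" by simp
  also have "\<dots> \<le> (\<Sum>e\<in>M. 1)"
  proof (rule sum_mono)
    fix e assume e: "e \<in> M"
    have "e \<inter> W \<subset> e" using assms(2) e by auto
    then have "card (e \<inter> W) < card e" using matching_fin(2)[OF assms(1)] e
      by (intro psubset_card_mono) auto
    then show "card (e \<inter> W) \<le> 1" using matching_fin(2)[OF assms(1)] e by auto
  qed
  finally show ?thesis by simp
qed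

lemma cs:
  fixes d :: "nat \<Rightarrow> real"
  shows "(\<Sum>v<n. d v)^2 \<le> real n * (\<Sum>v<n. (d v)^2)"
proof -
  define S where "S = (\<Sum>v<n. d v)"
  have "0 \<le> (\<Sum>v<n. (real n * d v - S)^2)" by (intro sum_nonneg) auto
  also have "\<dots> = (\<Sum>v<n. (real n)^2 * (d v)^2 - 2 * real n * S * d v + S^2)"
    by (intro sum.cong) (auto simp: power2_eq_square algebra_simps)
  also have "\<dots> = (real n)^2 * (\<Sum>v<n. (d v)^2) - 2 * real n * S * S + real n * S^2"
    by (simp add: sum.distrib sum_subtractf sum_distrib_left S_def)
  also have "\<dots> = real n * (real n * (\<Sum>v<n. (d v)^2) - S^2)"
    by (simp add: power2_eq_square algebra_simps)
  finally have "0 \<le> real n * (real n * (\<Sum>v<n. (d v)^2) - S^2)" .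
  then show ?thesis unfolding S_def[symmetric]
    by (cases "n = 0") (auto simp: zero_le_mult_iff S_def)
qed

lemma main_comb:
  assumes M: "\<forall>i<t. is_matching n (Ms i) \<and> card (Ms i) = r"
    and oi: "ordered_induced Ms t"
  shows "4 * r * t \<le> n * t + n"
proof -
  define V where "V i = \<Union>(Ms i)" for i
  have cV: "card (V i) = 2 * r" if "i < t" for i using M that card_V unfolding V_def by auto
  have Vsub: "V i \<subseteq> {..<n}" if "i < t" for i using M that matching_fin(3) unfolding V_def by auto
  have inter: "card (V i \<inter> V j) \<le> (if i = j then 2 * r else r)" if "i < t" "j < t" for i j
  proof (cases "i = j")
    case True then show ?thesis using cV that by simp
  next
    case False
    show ?thesis
    proof (cases "i < j")
      case True
      have "\<forall>e\<in>Ms i. \<not> e \<subseteq> V j" using oi True that unfolding ordered_induced_def V_def matched_vertices_def by auto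
      then show ?thesis using inter_bound[of n "Ms i" "V j"] M that False unfolding V_def by auto
    next
      case F: False
      then have "j < i" using False by auto
      have "\<forall>e\<in>Ms j. \<not> e \<subseteq> V i" using oi \<open>j < i\<close> that unfolding ordered_induced_def V_def matched_vertices_def by auto
      then have "card (V j \<inter> V i) \<le> r" using inter_bound[of n "Ms j" "V i"] M that unfolding V_def by auto
      then show ?thesis using False by (simp add: Int_commute)
    qed
  qed
  define d where "d v = (\<Sum>i<t. if v \<in> V i then 1 else 0::nat)" for v
  have ind: "(\<Sum>v<n. if v \<in> A then 1 else 0::nat) = card A" if "A \<subseteq> {..<n}" for A
  proof -
    have "(\<Sum>v<n. if v \<in> A then 1 else 0::nat) = card ({..<n} \<inter> A)"
      by (simp add: sum.If_cases)
    also have "{..<n} \<inter> A = A" using that by auto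
    finally show ?thesis .
  qed
  have sum1: "(\<Sum>v<n. d v) = 2 * r * t"
  proof -
    have "(\<Sum>v<n. d v) = (\<Sum>i<t. \<Sum>v<n. if v \<in> V i then 1 else 0::nat)"
      unfolding d_def by (rule sum.swap)
    also have "\<dots> = (\<Sum>i<t. 2 * r)" using ind Vsub cV by (intro sum.cong) auto
    finally show ?thesis by simp
  qed
  have ind2: "(\<Sum>v<n. if v \<in> V i \<inter> V j then 1 else 0::nat) = card (V i \<inter> V j)" if "i < t" for i j
    using ind[of "V i \<inter> V j"] Vsub[OF that] by blast
  have sum2: "(\<Sum>v<n. (d v)^2) \<le> r * t * t + r * t"
  proof -
    have "(\<Sum>v<n. (d v)^2) = (\<Sum>v<n. \<Sum>i<t. \<Sum>j<t. if v \<in> V i \<inter> V j then 1 else 0::nat)"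
      unfolding d_def power2_eq_square sum_product
      by (intro sum.cong refl) (auto split: if_splits)
    also have "\<dots> = (\<Sum>i<t. \<Sum>j<t. \<Sum>v<n. if v \<in> V i \<inter> V j then 1 else 0::nat)"
    proof -
      have "(\<Sum>v<n. \<Sum>i<t. \<Sum>j<t. if v \<in> V i \<inter> V j then 1 else 0::nat)
          = (\<Sum>i<t. \<Sum>v<n. \<Sum>j<t. if v \<in> V i \<inter> V j then 1 else 0::nat)"
        by (rule sum.swap)
      also have "\<dots> = (\<Sum>i<t. \<Sum>j<t. \<Sum>v<n. if v \<in> V i \<inter> V j then 1 else 0::nat)"
        by (intro sum.cong refl sum.swap)
      finally show ?thesis .
    qed
    also have "\<dots> = (\<Sum>i<t. \<Sum>j<t. card (V i \<inter> V j))"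
      by (intro sum.cong refl ind2) auto
    also have "\<dots> \<le> (\<Sum>i<t. \<Sum>j<t. if i = j then 2 * r else r)"
      using inter by (intro sum_mono) auto
    also have "\<dots> = (\<Sum>i<t. r * t + r)"
    proof (intro sum.cong refl)
      fix i assume i: "i \<in> {..<t}"
      have "(\<Sum>j<t. if i = j then 2 * r else r) = (\<Sum>j<t. r + (if i = j then r else 0))"
        by (intro sum.cong) auto
      also have "\<dots> = r * t + r" using i by (simp add: sum.distrib)
      finally show "(\<Sum>j<t. if i = j then 2 * r else r) = r * t + r" .
    qed
    finally show ?thesis by (simp add: algebra_simps)
  qed
  have "(real (2 * r * t))^2 \<le> real n * (\<Sum>v<n. (real (d v))^2)"
    using cs[where n=n and d="\<lambda>v. real (d v)"] sum1 by (simp add: of_nat_sum[symmetric])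
  also have "\<dots> \<le> real n * real (r * t * t + r * t)"
  proof -
    have "(\<Sum>v<n. (real (d v))^2) = real (\<Sum>v<n. (d v)^2)" by simp
    moreover have "real (\<Sum>v<n. (d v)^2) \<le> real (r * t * t + r * t)" using sum2 by (simp only: of_nat_le_iff)
    ultimately show ?thesis by (intro mult_left_mono) auto
  qed
  finally have "real ((2 * r * t)^2) \<le> real (n * (r * t * t + r * t))" by simp
  then have "(2 * r * t)^2 \<le> n * (r * t * t + r * t)" by (simp only: of_nat_le_iff)
  then have "(r * t) * (4 * r * t) \<le> (r * t) * (n * t + n)" by (simp add: power2_eq_square algebra_simps)
  then show ?thesis by (cases "r * t = 0") auto
qed

theorem theorem5p4:
  fixes \<epsilon> c :: real and n :: nat
  assumes "\<epsilon> > 0" and "c > 1/4 + \<epsilon>" and "n \<ge> 1"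
  shows "real (ORS n (c * real n)) \<le> 1/\<epsilon> + 1"
proof -
  define r where "r = nat \<lceil>c * real n\<rceil>"
  have npos: "real n > 0" using assms by simp
  have cn: "c * real n > 0" using assms npos by (intro mult_pos_pos) auto
  have rge: "real r \<ge> c * real n" unfolding r_def using cn
    by (metis le_of_int_ceiling less_le_not_le of_nat_nat ceiling_le_zero not_le)
  have bnd: "real t \<le> 1/\<epsilon> + 1" if ex: "ORS_graph_exists n r t" for t
  proof -
    obtain Ms where "\<forall>i<t. is_matching n (Ms i) \<and> card (Ms i) = r" "ordered_induced Ms t"
      using ex unfolding ORS_graph_exists_def by auto
    then have h: "4 * r * t \<le> n * t + n" by (rule main_comb)
    then have h': "4 * real r * real t \<le> real n * real t + real n"
      by (metis of_nat_add of_nat_le_iff of_nat_mult of_nat_numeral)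
    have "4 * \<epsilon> * real n * real t \<le> (4 * real r - real n) * real t"
    proof (intro mult_right_mono)
      show "4 * \<epsilon> * real n \<le> 4 * real r - real n"
      proof -
        have "(1/4+\<epsilon>)*real n \<le> c*real n" using assms by (intro mult_right_mono) auto
        then show ?thesis using rge by (simp add: algebra_simps)
      qed
    qed auto
    also have "\<dots> \<le> real n" using h' by (simp add: algebra_simps)
    finally have "(4 * \<epsilon> * real t) * real n \<le> 1 * real n" by (simp add: algebra_simps)
    then have "4 * \<epsilon> * real t \<le> 1" using npos by (simp only: mult_le_cancel_right)
    then have "real t \<le> 1 / (4 * \<epsilon>)" using assms(1) by (simp add: field_simps)
    also have "\<dots> \<le> 1 / \<epsilon>" using assms(1) by (simp add: field_simps)
    finally show ?thesis by simp
  qed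
  define B where "B = nat \<lfloor>1/\<epsilon> + 1\<rfloor>"
  have "ORS n (c * real n) \<le> B"
    unfolding ORS_def r_def[symmetric]
  proof (rule cSup_least)
    show "{t. ORS_graph_exists n r t} \<noteq> {}"
    proof -
      have "ORS_graph_exists n r 0" by (auto simp: ORS_graph_exists_def ordered_induced_def)
      then show ?thesis by blast
    qed
    fix t assume "t \<in> {t. ORS_graph_exists n r t}"
    then have "real t \<le> 1/\<epsilon> + 1" using bnd by auto
    then show "t \<le> B" unfolding B_def by linarith
  qed
  then have "real (ORS n (c * real n)) \<le> real B" by simp
  also have "\<dots> \<le> 1/\<epsilon> + 1" unfolding B_def using assms(1)
    by (smt (verit) of_int_floor_le of_nat_nat divide_pos_pos zero_le_floor)
  finally show ?thesis .
qed

end
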